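(* (i) $\mathbf{V}_{\mathcal{L}}=\mathbf{LZ}^{\bullet}\circ\mathbf{D}$. (ii) $\mathbf{V}_{\mathcal{R}}=\mathbf{RZ}^{\bullet}\circ\mathbf{D}$.
   Context: An idempotent semiring is an algebra $(S,+,\cdot)$ with $(S,+)$, $(S,\cdot)$ bands and both distributive laws; addition not assumed commutative. Green's relations: $a\,\mathcal{L}^{\bullet}\,b$ iff $ab=a$, $ba=b$; $a\,\mathcal{R}^{\bullet}\,b$ iff $ab=b$, $ba=a$. $\mathbf{V}_{\mathcal{L}}$ (resp. $\mathbf{V}_{\mathcal{R}}$) is the class of idempotent semirings $S$ on which $\mathcal{L}^{\bullet}$ (resp. $\mathcal{R}^{\bullet}$) is the least distributive lattice congruence; equivalently the variety of idempotent semirings satisfying $x\approx xy+x+xy$ (resp. $x\approx yx+x+yx$). $\mathbf{D}$ is the variety of distributive lattices (idempotent semirings satisfying $x+y\approx y+x$, $xy\approx yx$, $x+xy\approx x$); $\mathbf{LZ}^{\bullet}$ (resp. $\mathbf{RZ}^{\bullet}$) is the variety of idempotent semirings satisfying $xy\approx x$ (resp. $xy\approx y$). For classes $\mathbf{V},\mathbf{W}$ of idempotent semirings, the Mal'cev product $\mathbf{V}\circ\mathbf{W}$ is the class of idempotent semirings $S$ admitting a congruence $\rho$ with $S/\rho\in\mathbf{W}$ and every $\rho$-class (a subsemiring) belonging to $\mathbf{V}$. *)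

theory Defs
  imports Main
begin

text \<open>An algebra (S, p, m): carrier set S with addition p and multiplication m
  (total functions, required to be closed on S).  Addition is not assumed commutative.\<close>

definition idem_semiring :: "'a set \<Rightarrow> ('a \<Rightarrow> 'a \<Rightarrow> 'a) \<Rightarrow> ('a \<Rightarrow> 'a \<Rightarrow> 'a) \<Rightarrow> bool" where
  "idem_semiring S p m \<longleftrightarrow>
     (\<forall>x\<in>S. \<forall>y\<in>S. p x y \<in> S \<and> m x y \<in> S) \<and>
     (\<forall>x\<in>S. \<forall>y\<in>S. \<forall>z\<in>S. p (p x y) z = p x (p y z) \<and> m (m x y) z = m x (m y z)) \<and>
     (\<forall>x\<in>S. p x x = x \<and> m x x = x) \<and>
     (\<forall>x\<in>S. \<forall>y\<in>S. \<forall>z\<in>S. m x (p y z) = p (m x y) (m x z) \<and> m (p x y) z = p (m x z) (m y z))"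

definition V_L :: "'a set \<Rightarrow> ('a \<Rightarrow> 'a \<Rightarrow> 'a) \<Rightarrow> ('a \<Rightarrow> 'a \<Rightarrow> 'a) \<Rightarrow> bool" where
  "V_L S p m \<longleftrightarrow> idem_semiring S p m \<and>
     (\<forall>x\<in>S. \<forall>y\<in>S. x = p (p (m x y) x) (m x y))"

definition V_R :: "'a set \<Rightarrow> ('a \<Rightarrow> 'a \<Rightarrow> 'a) \<Rightarrow> ('a \<Rightarrow> 'a \<Rightarrow> 'a) \<Rightarrow> bool" where
  "V_R S p m \<longleftrightarrow> idem_semiring S p m \<and>
     (\<forall>x\<in>S. \<forall>y\<in>S. x = p (p (m y x) x) (m y x))"

text \<open>Distributive lattices as idempotent semirings.\<close>
definition D_var :: "'a set \<Rightarrow> ('a \<Rightarrow> 'a \<Rightarrow> 'a) \<Rightarrow> ('a \<Rightarrow> 'a \<Rightarrow> 'a) \<Rightarrow> bool" where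
  "D_var S p m \<longleftrightarrow> idem_semiring S p m \<and>
     (\<forall>x\<in>S. \<forall>y\<in>S. p x y = p y x \<and> m x y = m y x \<and> p x (m x y) = x)"

definition LZ_var :: "'a set \<Rightarrow> ('a \<Rightarrow> 'a \<Rightarrow> 'a) \<Rightarrow> ('a \<Rightarrow> 'a \<Rightarrow> 'a) \<Rightarrow> bool" where
  "LZ_var S p m \<longleftrightarrow> idem_semiring S p m \<and> (\<forall>x\<in>S. \<forall>y\<in>S. m x y = x)"

definition RZ_var :: "'a set \<Rightarrow> ('a \<Rightarrow> 'a \<Rightarrow> 'a) \<Rightarrow> ('a \<Rightarrow> 'a \<Rightarrow> 'a) \<Rightarrow> bool" where
  "RZ_var S p m \<longleftrightarrow> idem_semiring S p m \<and> (\<forall>x\<in>S. \<forall>y\<in>S. m x y = y)"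

definition semiring_cong :: "'a set \<Rightarrow> ('a \<Rightarrow> 'a \<Rightarrow> 'a) \<Rightarrow> ('a \<Rightarrow> 'a \<Rightarrow> 'a) \<Rightarrow> 'a rel \<Rightarrow> bool" where
  "semiring_cong S p m \<rho> \<longleftrightarrow> equiv S \<rho> \<and>
     (\<forall>a b c d. (a, b) \<in> \<rho> \<longrightarrow> (c, d) \<in> \<rho> \<longrightarrow> (p a c, p b d) \<in> \<rho> \<and> (m a c, m b d) \<in> \<rho>)"

definition quot_op :: "'a rel \<Rightarrow> ('a \<Rightarrow> 'a \<Rightarrow> 'a) \<Rightarrow> 'a set \<Rightarrow> 'a set \<Rightarrow> 'a set" where
  "quot_op \<rho> f A B = \<rho> `` {f a b | a b. a \<in> A \<and> b \<in> B}"

definition malcev ::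
  "('a set \<Rightarrow> ('a \<Rightarrow> 'a \<Rightarrow> 'a) \<Rightarrow> ('a \<Rightarrow> 'a \<Rightarrow> 'a) \<Rightarrow> bool) \<Rightarrow>
   ('a set set \<Rightarrow> ('a set \<Rightarrow> 'a set \<Rightarrow> 'a set) \<Rightarrow> ('a set \<Rightarrow> 'a set \<Rightarrow> 'a set) \<Rightarrow> bool) \<Rightarrow>
   'a set \<Rightarrow> ('a \<Rightarrow> 'a \<Rightarrow> 'a) \<Rightarrow> ('a \<Rightarrow> 'a \<Rightarrow> 'a) \<Rightarrow> bool" where
  "malcev V W S p m \<longleftrightarrow> idem_semiring S p m \<and>
     (\<exists>\<rho>. semiring_cong S p m \<rho> \<and>
          W (S // \<rho>) (quot_op \<rho> p) (quot_op \<rho> m) \<and>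
          (\<forall>C \<in> S // \<rho>. V C p m))"

end

theory Submission
  imports Defs
begin

lemma quot_class:
  assumes eq: "equiv S \<rho>" and a: "a \<in> S" and b: "b \<in> S"
    and comp: "\<And>a b c d. (a, b) \<in> \<rho> \<Longrightarrow> (c, d) \<in> \<rho> \<Longrightarrow> (f a c, f b d) \<in> \<rho>"
  shows "quot_op \<rho> f (\<rho> `` {a}) (\<rho> `` {b}) = \<rho> `` {f a b}"
proof -
  have ra: "(a,a) \<in> \<rho>" and rb: "(b,b) \<in> \<rho>" using eq a b by (auto simp: equiv_def refl_on_def)
  have tr: "trans \<rho>" and sy: "sym \<rho>" using eq by (auto simp: equiv_def)
  show ?thesis unfolding quot_op_def
  proof (rule set_eqI, rule iffI)
    fix x assume "x \<in> \<rho> `` {f a' b' |a' b'. a' \<in> \<rho> `` {a} \<and> b' \<in> \<rho> `` {b}}"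
    then obtain a' b' where h: "(a,a') \<in> \<rho>" "(b,b') \<in> \<rho>" "(f a' b', x) \<in> \<rho>" by auto
    have "(f a b, f a' b') \<in> \<rho>" using comp h by blast
    then have "(f a b, x) \<in> \<rho>" using h tr by (meson transD)
    then show "x \<in> \<rho> `` {f a b}" by auto
  next
    fix x assume "x \<in> \<rho> `` {f a b}"
    then show "x \<in> \<rho> `` {f a' b' |a' b'. a' \<in> \<rho> `` {a} \<and> b' \<in> \<rho> `` {b}}"
      using ra rb by blast
  qed
qed

lemma back_L:
  assumes I: "idem_semiring S p m" and C: "semiring_cong S p m \<rho>"
    and D: "D_var (S // \<rho>) (quot_op \<rho> p) (quot_op \<rho> m)"
    and Z: "\<forall>C\<in>S // \<rho>. LZ_var C p m"
  shows "V_L S p m"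
proof -
  have eq: "equiv S \<rho>" using C by (simp add: semiring_cong_def)
  have cp: "\<And>a b c d. (a, b) \<in> \<rho> \<Longrightarrow> (c, d) \<in> \<rho> \<Longrightarrow> (p a c, p b d) \<in> \<rho>"
   and cm: "\<And>a b c d. (a, b) \<in> \<rho> \<Longrightarrow> (c, d) \<in> \<rho> \<Longrightarrow> (m a c, m b d) \<in> \<rho>"
    using C by (auto simp: semiring_cong_def)
  have clp: "\<And>x y. x \<in> S \<Longrightarrow> y \<in> S \<Longrightarrow> p x y \<in> S"
   and clm: "\<And>x y. x \<in> S \<Longrightarrow> y \<in> S \<Longrightarrow> m x y \<in> S"
   and ma: "\<And>x y z. x \<in> S \<Longrightarrow> y \<in> S \<Longrightarrow> z \<in> S \<Longrightarrow> m (m x y) z = m x (m y z)"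
   and mi: "\<And>x. x \<in> S \<Longrightarrow> m x x = x"
   and dl: "\<And>x y z. x \<in> S \<Longrightarrow> y \<in> S \<Longrightarrow> z \<in> S \<Longrightarrow> m x (p y z) = p (m x y) (m x z)"
    using I unfolding idem_semiring_def by blast+
  have QP: "\<And>a b. a \<in> S \<Longrightarrow> b \<in> S \<Longrightarrow> quot_op \<rho> p (\<rho>``{a}) (\<rho>``{b}) = \<rho>``{p a b}"
    using quot_class[OF eq _ _, of _ _ p] cp by blast
  have QM: "\<And>a b. a \<in> S \<Longrightarrow> b \<in> S \<Longrightarrow> quot_op \<rho> m (\<rho>``{a}) (\<rho>``{b}) = \<rho>``{m a b}"
    using quot_class[OF eq _ _, of _ _ m] cm by blast
  have Dc: "\<forall>X\<in>S//\<rho>. \<forall>Y\<in>S//\<rho>. quot_op \<rho> p X Y = quot_op \<rho> p Y X \<and>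
     quot_op \<rho> p X (quot_op \<rho> m X Y) = X" using D by (simp add: D_var_def)
  show ?thesis unfolding V_L_def
  proof (intro conjI I ballI)
    fix x y assume x: "x \<in> S" and y: "y \<in> S"
    define u where "u = p (p (m x y) x) (m x y)"
    have xyS: "m x y \<in> S" using clm x y by blast
    have XQ: "\<rho>``{x} \<in> S//\<rho>" "\<rho>``{y} \<in> S//\<rho>" "\<rho>``{m x y} \<in> S//\<rho>"
      using x y xyS by (auto intro: quotientI)
    have e1: "\<rho>``{p x (m x y)} = \<rho>``{x}"
      using Dc XQ QP QM x y xyS by metis
    have e2: "\<rho>``{p (m x y) x} = \<rho>``{p x (m x y)}"
      using Dc XQ QP x y xyS by metis
    have "\<rho>``{u} = quot_op \<rho> p (\<rho>``{p (m x y) x}) (\<rho>``{m x y})"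
      unfolding u_def using QP clp x xyS by simp
    also have "\<dots> = \<rho>``{x}" using e1 e2 QP x xyS by simp
    finally have eu: "\<rho>``{u} = \<rho>``{x}" .
    have uS: "u \<in> S" unfolding u_def using clp x xyS by blast
    have "u \<in> \<rho>``{u}" using eq uS by (auto simp: equiv_def refl_on_def)
    then have uX: "u \<in> \<rho>``{x}" using eu by simp
    have xX: "x \<in> \<rho>``{x}" using eq x by (auto simp: equiv_def refl_on_def)
    have "LZ_var (\<rho>``{x}) p m" using Z XQ by blast
    then have mxu: "m x u = x" using uX xX by (simp add: LZ_var_def)
    have mxxy: "m x (m x y) = m x y" using ma[OF x x y] mi[OF x] by simp
    have "m x u = u" unfolding u_def
      using dl[OF x clp[OF xyS x] xyS] dl[OF x xyS x] mxxy mi[OF x] by simp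
    then show "x = p (p (m x y) x) (m x y)" using mxu u_def by simp
  qed
qed

locale vl =
  fixes S p m
  assumes VL: "V_L S p m"
begin

lemma I: "idem_semiring S p m" using VL by (simp add: V_L_def)

lemma clp[simp]: "x \<in> S \<Longrightarrow> y \<in> S \<Longrightarrow> p x y \<in> S"
  and clm[simp]: "x \<in> S \<Longrightarrow> y \<in> S \<Longrightarrow> m x y \<in> S"
  and pa[simp]: "x \<in> S \<Longrightarrow> y \<in> S \<Longrightarrow> z \<in> S \<Longrightarrow> p (p x y) z = p x (p y z)"
  and ma[simp]: "x \<in> S \<Longrightarrow> y \<in> S \<Longrightarrow> z \<in> S \<Longrightarrow> m (m x y) z = m x (m y z)"
  and pi[simp]: "x \<in> S \<Longrightarrow> p x x = x"
  and mi[simp]: "x \<in> S \<Longrightarrow> m x x = x"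
  and dl[simp]: "x \<in> S \<Longrightarrow> y \<in> S \<Longrightarrow> z \<in> S \<Longrightarrow> m x (p y z) = p (m x y) (m x z)"
  and dr[simp]: "x \<in> S \<Longrightarrow> y \<in> S \<Longrightarrow> z \<in> S \<Longrightarrow> m (p x y) z = p (m x z) (m y z)"
  using I unfolding idem_semiring_def by blast+

lemma vlid: "x \<in> S \<Longrightarrow> y \<in> S \<Longrightarrow> x = p (m x y) (p x (m x y))"
  using VL unfolding V_L_def by (metis pa clm)

lemma pp[simp]: "x \<in> S \<Longrightarrow> y \<in> S \<Longrightarrow> p x (p x y) = p x y"
  using pa[of x x y] by simp
lemma mm[simp]: "x \<in> S \<Longrightarrow> y \<in> S \<Longrightarrow> m x (m x y) = m x y"
  using ma[of x x y] by simp

lemma A[simp]: "x \<in> S \<Longrightarrow> y \<in> S \<Longrightarrow> p x (m x y) = x"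
proof -
  assume x: "x \<in> S" and y: "y \<in> S"
  have e: "p (m x y) (p x (m x y)) = x" using vlid[OF x y] by simp
  have "p x (m x y) = p (p (m x y) (p x (m x y))) (m x y)" by (simp only: e)
  also have "\<dots> = p (m x y) (p x (m x y))" using x y by simp
  also have "\<dots> = x" by (rule e)
  finally show ?thesis .
qed

lemma B[simp]: "x \<in> S \<Longrightarrow> y \<in> S \<Longrightarrow> p (m x y) x = x"
proof -
  assume x: "x \<in> S" and y: "y \<in> S"
  have e: "p (m x y) (p x (m x y)) = x" using vlid[OF x y] by simp
  have "p (m x y) x = p (m x y) (p (m x y) (p x (m x y)))" by (simp only: e)
  also have "\<dots> = x" using x y e by simp
  finally show ?thesis .
qed

lemma A'[simp]: "x \<in> S \<Longrightarrow> y \<in> S \<Longrightarrow> z \<in> S \<Longrightarrow> p x (p (m x y) z) = p x z"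
  using pa[of x "m x y" z] by simp

lemma B'[simp]: "x \<in> S \<Longrightarrow> y \<in> S \<Longrightarrow> z \<in> S \<Longrightarrow> p (m x y) (p x z) = p x z"
  using pa[of "m x y" x z] by simp

lemma LR[simp]: "x \<in> S \<Longrightarrow> y \<in> S \<Longrightarrow> m x (m y x) = m x y"
proof -
  assume x: "x \<in> S" and y: "y \<in> S"
  have "m (m x y) x = m (m x y) (p x (m x y))" using A x y by simp
  also have "\<dots> = p (m (m x y) x) (m x y)" using x y dl[of "m x y" x "m x y"]
    by (metis clm mi)
  also have "\<dots> = m x y" using B[of "m x y" x] x y by simp
  finally show ?thesis using x y by simp
qed

definition rho where "rho = {(a,b). a \<in> S \<and> b \<in> S \<and> m a b = a \<and> m b a = b}"

lemma LR2[simp]: "x \<in> S \<Longrightarrow> y \<in> S \<Longrightarrow> z \<in> S \<Longrightarrow> m x (m y (m x z)) = m x (m y z)"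
proof -
  assume S: "x \<in> S" "y \<in> S" "z \<in> S"
  have "m x (m y (m x z)) = m (m x (m y x)) z"
    by (simp only: ma[OF S(1) clm[OF S(2) S(1)] S(3)] ma[OF S(2) S(1) S(3)])
  also have "\<dots> = m (m x y) z" using S LR by simp
  also have "\<dots> = m x (m y z)" using S by simp
  finally show ?thesis .
qed

lemma equiv_rho: "equiv S rho"
proof -
  have "trans rho"
  proof (rule transI)
    fix a b c assume "(a,b) \<in> rho" "(b,c) \<in> rho"
    then have S: "a \<in> S" "b \<in> S" "c \<in> S" and e: "m a b = a" "m b a = b" "m b c = b" "m c b = c"
      by (auto simp: rho_def)
    have "m a c = m (m a b) c" using e by simp
    also have "\<dots> = m a (m b c)" using S by (rule ma)
    also have "\<dots> = a" using e by simp
    finally have 1: "m a c = a" .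
    have "m c a = m (m c b) a" using e by simp
    also have "\<dots> = m c (m b a)" using S by (intro ma)
    also have "\<dots> = c" using e by simp
    finally have 2: "m c a = c" .
    show "(a,c) \<in> rho" using S 1 2 by (simp add: rho_def)
  qed
  moreover have "refl_on S rho" unfolding refl_on_def rho_def by auto
  moreover have "sym rho" unfolding sym_def rho_def by auto
  moreover have "rho \<subseteq> S \<times> S" unfolding rho_def by auto
  ultimately show ?thesis by (simp add: equiv_def)
qed

lemma rc: "a \<in> S \<Longrightarrow> b \<in> S \<Longrightarrow> c \<in> S \<Longrightarrow> m a b = a \<Longrightarrow> m (m a c) (m b c) = m a c"
proof -
  assume S: "a \<in> S" "b \<in> S" "c \<in> S" and e: "m a b = a"
  have h: "m a c = m a (m b c)"
  proof -
    have "m a (m b c) = m (m a b) c" using S by simp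
    then show ?thesis using e by simp
  qed
  have "m (m a c) (m b c) = m (m a (m b c)) (m b c)" using h by simp
  also have "\<dots> = m a (m (m b c) (m b c))" using S by simp
  also have "\<dots> = m a c" using S h by simp
  finally show ?thesis .
qed

lemma rho_m: assumes "(a,b) \<in> rho" "(c,d) \<in> rho" shows "(m a c, m b d) \<in> rho"
proof -
  have S: "a \<in> S" "b \<in> S" "c \<in> S" "d \<in> S" and e: "m a b = a" "m b a = b" "m c d = c" "m d c = d"
    using assms by (auto simp: rho_def)
  have 1: "(m a c, m b c) \<in> rho" unfolding rho_def using S e rc[of a b c] rc[of b a c] by auto
  have 2: "(m b c, m b d) \<in> rho" unfolding rho_def using S e by simp
  show ?thesis using 1 2 equiv_rho unfolding equiv_def trans_def by blast
qed

lemma rho_p: assumes "(a,b) \<in> rho" "(c,d) \<in> rho" shows "(p a c, p b d) \<in> rho"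
proof -
  have S: "a \<in> S" "b \<in> S" "c \<in> S" "d \<in> S" and e: "m a b = a" "m b a = b" "m c d = c" "m d c = d"
    using assms by (auto simp: rho_def)
  have k: "\<And>a b c d. a \<in> S \<Longrightarrow> b \<in> S \<Longrightarrow> c \<in> S \<Longrightarrow> d \<in> S \<Longrightarrow> m a b = a \<Longrightarrow> m c d = c \<Longrightarrow>
     m (p a c) (p b d) = p a c"
  proof -
    fix a b c d assume S: "a \<in> S" "b \<in> S" "c \<in> S" "d \<in> S" and e: "m a b = a" "m c d = c"
    have "m (p a c) (p b d) = p (m a (p b d)) (m c (p b d))" using S by (intro dr) (auto intro: clp)
    also have "\<dots> = p a c" using S e A'[of a d c] by simp
    finally show "m (p a c) (p b d) = p a c" .
  qed
  show ?thesis unfolding rho_def using S e k[of a b c d] k[of b a d c] by auto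
qed

lemma cong: "semiring_cong S p m rho"
  unfolding semiring_cong_def using equiv_rho rho_m rho_p by blast

lemma QP: "a \<in> S \<Longrightarrow> b \<in> S \<Longrightarrow> quot_op rho p (rho``{a}) (rho``{b}) = rho``{p a b}"
  using quot_class[OF equiv_rho _ _, of _ _ p] rho_p by blast
lemma QM: "a \<in> S \<Longrightarrow> b \<in> S \<Longrightarrow> quot_op rho m (rho``{a}) (rho``{b}) = rho``{m a b}"
  using quot_class[OF equiv_rho _ _, of _ _ m] rho_m by blast

lemma cls: "a \<in> S \<Longrightarrow> b \<in> S \<Longrightarrow> (a,b) \<in> rho \<Longrightarrow> rho``{a} = rho``{b}"
  using equiv_rho by (simp add: equiv_class_eq)

lemma comm_p: "a \<in> S \<Longrightarrow> b \<in> S \<Longrightarrow> (p a b, p b a) \<in> rho"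
proof -
  have k: "\<And>a b. a \<in> S \<Longrightarrow> b \<in> S \<Longrightarrow> m (p a b) (p b a) = p a b"
  proof -
    fix a b assume S: "a \<in> S" "b \<in> S"
    have "m (p a b) (p b a) = p (m a (p b a)) (m b (p b a))" using S by (intro dr) (auto intro: clp)
    also have "\<dots> = p a b" using S by simp
    finally show "m (p a b) (p b a) = p a b" .
  qed
  assume "a \<in> S" "b \<in> S" then show ?thesis using k[of a b] k[of b a] by (simp add: rho_def)
qed

lemma comm_m: "a \<in> S \<Longrightarrow> b \<in> S \<Longrightarrow> (m a b, m b a) \<in> rho"
  by (simp add: rho_def)

lemma quotD: "D_var (S // rho) (quot_op rho p) (quot_op rho m)"
  unfolding D_var_def idem_semiring_def
proof (intro conjI ballI)
  fix X Y Z assume X: "X \<in> S//rho" and Y: "Y \<in> S//rho" and Z: "Z \<in> S//rho"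
  obtain x y z where xyz: "x \<in> S" "y \<in> S" "z \<in> S" "X = rho``{x}" "Y = rho``{y}" "Z = rho``{z}"
    using X Y Z by (auto elim!: quotientE)
  show "quot_op rho p X Y \<in> S // rho" "quot_op rho m X Y \<in> S // rho"
    using xyz by (auto simp: QP QM intro: quotientI)
  show "quot_op rho p (quot_op rho p X Y) Z = quot_op rho p X (quot_op rho p Y Z)"
       "quot_op rho m (quot_op rho m X Y) Z = quot_op rho m X (quot_op rho m Y Z)"
       "quot_op rho m X (quot_op rho p Y Z) = quot_op rho p (quot_op rho m X Y) (quot_op rho m X Z)"
       "quot_op rho m (quot_op rho p X Y) Z = quot_op rho p (quot_op rho m X Z) (quot_op rho m Y Z)"
    using xyz by (simp_all add: QP QM)
  show "quot_op rho p X Y = quot_op rho p Y X" "quot_op rho m X Y = quot_op rho m Y X"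
    using xyz by (simp_all add: QP QM cls comm_p comm_m)
  show "quot_op rho p X (quot_op rho m X Y) = X"
    using xyz by (simp add: QP QM)
next
  fix X assume X: "X \<in> S//rho"
  obtain x where xyz: "x \<in> S" "X = rho``{x}" using X by (auto elim!: quotientE)
  show "quot_op rho p X X = X" "quot_op rho m X X = X" using xyz by (simp_all add: QP QM)
qed

lemma classes: "C \<in> S // rho \<Longrightarrow> LZ_var C p m"
proof -
  assume "C \<in> S // rho"
  then obtain x where x: "x \<in> S" and C: "C = rho``{x}" by (auto elim!: quotientE)
  have CS: "C \<subseteq> S" using C by (auto simp: rho_def)
  have mem: "\<And>a. a \<in> C \<longleftrightarrow> (x,a) \<in> rho" using C by auto
  have same: "\<And>a b. a \<in> C \<Longrightarrow> b \<in> C \<Longrightarrow> (a,b) \<in> rho"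
    using mem equiv_rho unfolding equiv_def sym_def trans_def by blast
  have mab: "\<And>a b. a \<in> C \<Longrightarrow> b \<in> C \<Longrightarrow> m a b = a" using same by (simp add: rho_def)
  have pab: "\<And>a b. a \<in> C \<Longrightarrow> b \<in> C \<Longrightarrow> p a b \<in> C"
  proof -
    fix a b assume a: "a \<in> C" and b: "b \<in> C"
    have S: "a \<in> S" "b \<in> S" using a b CS by auto
    have "(a, p a b) \<in> rho" using S mab[OF a b] mab[OF b a] by (simp add: rho_def)
    then show "p a b \<in> C" using mem a equiv_rho unfolding equiv_def trans_def by blast
  qed
  show "LZ_var C p m" unfolding LZ_var_def idem_semiring_def
    using CS mab pab I unfolding idem_semiring_def by (auto, blast+)
qed

lemma forward: "malcev LZ_var D_var S p m"
  unfolding malcev_def using I cong quotD classes by blast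

end

lemma part_L: "V_L S p m \<longleftrightarrow> malcev LZ_var D_var S p m"
proof
  assume "V_L S p m" then interpret vl S p m by unfold_locales
  show "malcev LZ_var D_var S p m" by (rule forward)
next
  assume "malcev LZ_var D_var S p m"
  then show "V_L S p m" unfolding malcev_def using back_L by blast
qed

definition fl :: "('b \<Rightarrow> 'b \<Rightarrow> 'b) \<Rightarrow> 'b \<Rightarrow> 'b \<Rightarrow> 'b" where "fl f = (\<lambda>x y. f y x)"

lemma idem_fl: "idem_semiring S p (fl m) \<longleftrightarrow> idem_semiring S p m"
  unfolding idem_semiring_def fl_def by auto

lemma VR_fl: "V_R S p m \<longleftrightarrow> V_L S p (fl m)"
  unfolding V_R_def V_L_def idem_fl by (simp add: fl_def)

lemma RZ_fl: "RZ_var C p m \<longleftrightarrow> LZ_var C p (fl m)"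
  unfolding RZ_var_def LZ_var_def idem_fl by (auto simp: fl_def)

lemma cong_fl: "semiring_cong S p (fl m) \<rho> \<longleftrightarrow> semiring_cong S p m \<rho>"
  unfolding semiring_cong_def fl_def by auto

lemma quot_fl: "quot_op \<rho> (fl m) = fl (quot_op \<rho> m)"
  unfolding quot_op_def fl_def by (intro ext) (auto; blast)

lemma D_fl: "D_var Q P (fl M) \<longleftrightarrow> D_var Q P M"
proof -
  have "(\<forall>x\<in>Q. \<forall>y\<in>Q. P x y = P y x \<and> M y x = M x y \<and> P x (M y x) = x) \<longleftrightarrow>
        (\<forall>x\<in>Q. \<forall>y\<in>Q. P x y = P y x \<and> M x y = M y x \<and> P x (M x y) = x)"
  proof
    assume h: "\<forall>x\<in>Q. \<forall>y\<in>Q. P x y = P y x \<and> M y x = M x y \<and> P x (M y x) = x"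
    show "\<forall>x\<in>Q. \<forall>y\<in>Q. P x y = P y x \<and> M x y = M y x \<and> P x (M x y) = x"
    proof (intro ballI)
      fix x y assume "x \<in> Q" "y \<in> Q"
      then show "P x y = P y x \<and> M x y = M y x \<and> P x (M x y) = x" using h by metis
    qed
  next
    assume h: "\<forall>x\<in>Q. \<forall>y\<in>Q. P x y = P y x \<and> M x y = M y x \<and> P x (M x y) = x"
    show "\<forall>x\<in>Q. \<forall>y\<in>Q. P x y = P y x \<and> M y x = M x y \<and> P x (M y x) = x"
    proof (intro ballI)
      fix x y assume "x \<in> Q" "y \<in> Q"
      then show "P x y = P y x \<and> M y x = M x y \<and> P x (M y x) = x" using h by metis
    qed
  qed
  then show ?thesis unfolding D_var_def idem_fl by (simp add: fl_def)
qed

lemma part_R: "V_R S p m \<longleftrightarrow> malcev RZ_var D_var S p m"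
proof -
  have "malcev RZ_var D_var S p m \<longleftrightarrow> malcev LZ_var D_var S p (fl m)"
    unfolding malcev_def idem_fl cong_fl quot_fl D_fl RZ_fl ..
  then show ?thesis using part_L VR_fl by blast
qed

theorem theorem4p1:
  fixes S :: "'a set" and p m :: "'a \<Rightarrow> 'a \<Rightarrow> 'a"
  shows "(V_L S p m \<longleftrightarrow> malcev LZ_var D_var S p m) \<and>
         (V_R S p m \<longleftrightarrow> malcev RZ_var D_var S p m)"
  using part_L part_R by blast

end
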